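(* Let $H$ be an admissible Hamiltonian with Hessian $\mathcal H$, and let $q_0,\dots,q_{n-1}$ be the functions defined by $q_\ell(x)=\frac1{2n}\operatorname{tr}\big((A^T)^\ell(J(x)\mathcal H)^2\big)$ (so that $(J(x)\mathcal H)^2=\sum_{\ell=0}^{n-1}q_\ell(x)A^\ell$). Then $\nabla q_\ell(x)=A^\ell\nabla q_0(x)$, equivalently $\nabla q_\ell=A\nabla q_{\ell-1}$, for $\ell=1,\dots,n-1$.
   Context: Fix an integer $n\ge 2$. Points of $\mathbb R^{2n}$ are $x=(x_1,\dots,x_{2n})^{T}$; write $u=(x_1,\dots,x_n)^T$. Let $X(u)$ be the $n\times n$ matrix with entries $X(u)_{ij}=x_{k}$ where $k\in\{1,\dots,n\}$, $k\equiv i+j-1 \pmod n$, and let $J(x)=\begin{pmatrix}0&X(u)\\-X(u)&0\end{pmatrix}$. Let $\mathcal P$ be the $n\times n$ cyclic shift matrix ($\mathcal P_{i,i+1}=1$ for $1\le i\le n-1$, $\mathcal P_{n,1}=1$, all other entries $0$) and $A=\begin{pmatrix}\mathcal P&0\\0&\mathcal P\end{pmatrix}$. An admissible Hamiltonian is a homogeneous quadratic form $H(x)=\tfrac12 x^T\mathcal H x$ with a constant symmetric matrix $\mathcal H=\nabla^2H$ satisfying $A\mathcal H=\mathcal H A^T$. *)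

theory Defs
  imports "HOL-Analysis.Derivative" "Jordan_Normal_Form.Matrix"
begin

text \<open>Indices are 0-based: entry (i,j) for i,j < dim. Vectors x of R^(2n) are real vecs of dim 2n.\<close>

text \<open>X(u)_{ij} = x_k with k = i+j-1 mod n (1-based), i.e. x_((i+j) mod n) 0-based.\<close>
definition Xmat :: "nat \<Rightarrow> real vec \<Rightarrow> real mat" where
  "Xmat n x = mat n n (\<lambda>(i,j). x $ ((i + j) mod n))"

definition Jmat :: "nat \<Rightarrow> real vec \<Rightarrow> real mat" where
  "Jmat n x = four_block_mat (0\<^sub>m n n) (Xmat n x) (- Xmat n x) (0\<^sub>m n n)"

definition Pshift :: "nat \<Rightarrow> real mat" where
  "Pshift n = mat n n (\<lambda>(i,j). if j = (i + 1) mod n then 1 else 0)"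

definition Amat :: "nat \<Rightarrow> real mat" where
  "Amat n = four_block_mat (Pshift n) (0\<^sub>m n n) (0\<^sub>m n n) (Pshift n)"

definition admissible_hessian :: "nat \<Rightarrow> real mat \<Rightarrow> bool" where
  "admissible_hessian n Hs \<longleftrightarrow> Hs \<in> carrier_mat (2*n) (2*n) \<and> transpose_mat Hs = Hs
     \<and> Amat n * Hs = Hs * transpose_mat (Amat n)"

definition mtrace :: "real mat \<Rightarrow> real" where
  "mtrace M = (\<Sum>i<dim_row M. M $$ (i,i))"

definition qfun :: "nat \<Rightarrow> real mat \<Rightarrow> nat \<Rightarrow> real vec \<Rightarrow> real" where
  "qfun n Hs l x = (1 / (2 * real n)) *
     mtrace ((transpose_mat (Amat n) ^\<^sub>m l) * ((Jmat n x * Hs) ^\<^sub>m 2))"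

definition grad :: "nat \<Rightarrow> (real vec \<Rightarrow> real) \<Rightarrow> real vec \<Rightarrow> real vec" where
  "grad m f x = vec m (\<lambda>k. deriv (\<lambda>t. f (x + t \<cdot>\<^sub>v unit_vec m k)) 0)"

end

theory Submission
  imports Defs
begin

definition shift :: "nat \<Rightarrow> nat \<Rightarrow> nat" where
  "shift n m = (if m + 1 = n then 0 else if m + 1 = 2*n then n else m + 1)"
definition unshift :: "nat \<Rightarrow> nat \<Rightarrow> nat" where
  "unshift n i = (if i = 0 then n - 1 else if i = n then 2*n - 1 else i - 1)"

lemma shift_unshift: "n \<ge> 1 \<Longrightarrow> m < 2*n \<Longrightarrow> i < 2*n \<Longrightarrow> (shift n m = i) = (m = unshift n i)"
  unfolding shift_def unshift_def by auto
lemma shift_unshift': "n \<ge> 1 \<Longrightarrow> m < 2*n \<Longrightarrow> i < 2*n \<Longrightarrow> (i = shift n m) = (m = unshift n i)"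
  unfolding shift_def unshift_def by auto
lemma unshift_ge_n: "n \<ge> 1 \<Longrightarrow> m < 2*n \<Longrightarrow> (n \<le> unshift n m) = (n \<le> m)"
  unfolding unshift_def by auto
lemma shift_lt: "n \<ge> 1 \<Longrightarrow> m < 2*n \<Longrightarrow> shift n m < 2*n"
  unfolding shift_def by auto
lemma unshift_lt: "n \<ge> 1 \<Longrightarrow> m < 2*n \<Longrightarrow> unshift n m < 2*n"
  unfolding unshift_def by auto
lemma unshift_lt_n: "n \<ge> 1 \<Longrightarrow> m < 2*n \<Longrightarrow> (unshift n m < n) = (m < n)"
  unfolding unshift_def by auto
lemma shift_lt_n: "n \<ge> 1 \<Longrightarrow> m < 2*n \<Longrightarrow> (shift n m < n) = (m < n)"
  unfolding shift_def by auto

lemma unshift_mod: "n \<ge> 1 \<Longrightarrow> i < 2*n \<Longrightarrow> (unshift n i + j + 1) mod n = (i + j) mod n"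
proof -
  assume "n \<ge> 1" "i < 2*n"
  hence "unshift n i + j + 1 = i + j + n \<or> unshift n i + j + 1 = i + j"
    unfolding unshift_def by auto
  thus ?thesis by (metis mod_add_self2)
qed

lemma mod_suc_inj: "n \<ge> 1 \<Longrightarrow> ((a::nat) + 1) mod n = (b + 1) mod n \<Longrightarrow> a mod n = b mod n"
  by (metis (no_types, opaque_lifting) add.assoc le_iff_add mod_add_left_eq mod_add_self2)

lemma P_mod: "(i::nat) < n \<Longrightarrow> (i + 1) mod n = (if i + 1 = n then 0 else i + 1)"
proof (cases "i + 1 = n")
  case True thus ?thesis by simp
next
  case False assume "i < n" with False have "i + 1 < n" by simp
  thus ?thesis using False by simp
qed

lemma shift_alt: assumes "n \<ge> 1" "i < 2*n"
  shows "shift n i = (if i < n then (i+1) mod n else n + (i - n + 1) mod n)"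
proof (cases "i < n")
  case True
  show ?thesis
  proof (cases "i + 1 = n")
    case True2: True
    thus ?thesis using True unfolding shift_def by simp
  next
    case False2: False
    hence "i + 1 < n" using True by simp
    hence "i + 1 \<noteq> 2*n" "(i+1) mod n = i + 1" by simp_all
    thus ?thesis using True False2 unfolding shift_def by simp
  qed
next
  case False
  show ?thesis
  proof (cases "i + 1 = 2*n")
    case True2: True
    hence "i - n + 1 = n" by simp
    thus ?thesis using False True2 unfolding shift_def by simp
  next
    case False2: False
    hence "i - n + 1 < n" "i + 1 \<noteq> n" using False assms by simp_all
    hence "(i - n + 1) mod n = i - n + 1" by simp
    thus ?thesis using False False2 \<open>i + 1 \<noteq> n\<close> unfolding shift_def by simp
  qed
qed

lemma key_mod: assumes "n \<ge> 1" "k < 2*n"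
  shows "(s mod n = k) = ((s+1) mod n = shift n k)"
proof (cases "k < n")
  case True
  have sk: "shift n k = (k+1) mod n" using shift_alt[OF assms] True by simp
  have e: "(s+1) mod n = (s mod n + 1) mod n" by (rule mod_add_left_eq[symmetric])
  show ?thesis
  proof
    assume "s mod n = k" thus "(s+1) mod n = shift n k" unfolding sk e by simp
  next
    assume h: "(s+1) mod n = shift n k"
    have "(s+1) mod n = (k+1) mod n" using h unfolding sk .
    hence "s mod n = k mod n" by (rule mod_suc_inj[OF assms(1)])
    thus "s mod n = k" using True by simp
  qed
next
  case False
  have a: "\<not> shift n k < n" using shift_lt_n[OF assms] False by simp
  have b: "(s+1) mod n < n" "s mod n < n" using assms(1) by auto
  have 1: "s mod n \<noteq> k" using False b(2) by linarith
  have 2: "(s+1) mod n \<noteq> shift n k" using a b(1) by linarith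
  show ?thesis using 1 2 by blast
qed

lemma Pshift_carrier: "Pshift n \<in> carrier_mat n n" unfolding Pshift_def by auto
lemma Amat_carrier: "Amat n \<in> carrier_mat (2*n) (2*n)"
  unfolding Amat_def using Pshift_carrier[of n] by (simp add: mult_2)
lemma Xmat_carrier: "Xmat n x \<in> carrier_mat n n" unfolding Xmat_def by auto
lemma Jmat_carrier: "Jmat n x \<in> carrier_mat (2*n) (2*n)"
  unfolding Jmat_def using Xmat_carrier[of n x] by (simp add: mult_2)

lemma Pshift_index: "i < n \<Longrightarrow> j < n \<Longrightarrow> Pshift n $$ (i,j) = (if j = (i+1) mod n then 1 else 0)"
  unfolding Pshift_def by simp

lemma Amat_index: assumes "n \<ge> 1" "i < 2*n" "j < 2*n"
  shows "Amat n $$ (i,j) = (if j = shift n i then 1 else 0)"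
proof -
  have e: "Amat n $$ (i,j) = (if i < n then if j < n then Pshift n $$ (i,j) else 0
      else if j < n then 0 else Pshift n $$ (i - n, j - n))"
    unfolding Amat_def using assms Pshift_carrier[of n] by (subst index_mat_four_block) auto
  have m: "(i+1) mod n < n" "(i - n + 1) mod n < n" using assms by auto
  show ?thesis
  proof (cases "i < n")
    case True
    thus ?thesis unfolding e shift_alt[OF assms(1,2)] using m assms
      by (cases "j < n") (auto simp: Pshift_index)
  next
    case False
    thus ?thesis unfolding e shift_alt[OF assms(1,2)] using m assms
      by (cases "j < n") (auto simp: Pshift_index)
  qed
qed

lemma Xmat_index: "i < n \<Longrightarrow> j < n \<Longrightarrow> Xmat n x $$ (i,j) = x $ ((i+j) mod n)"
  unfolding Xmat_def by simp

lemma Jmat_index: assumes "i < 2*n" "j < 2*n"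
  shows "Jmat n x $$ (i,j) = (if i < n \<and> n \<le> j then x $ ((i+j) mod n)
      else if n \<le> i \<and> j < n then - (x $ ((i+j) mod n)) else 0)"
proof -
  have e: "Jmat n x $$ (i,j) = (if i < n then if j < n then 0 else Xmat n x $$ (i, j-n)
      else if j < n then - Xmat n x $$ (i-n, j) else 0)"
    unfolding Jmat_def using assms Xmat_carrier[of n x] by (subst index_mat_four_block) auto
  show ?thesis
  proof (cases "i < n")
    case True
    show ?thesis
    proof (cases "j < n")
      case True2: True
      thus ?thesis unfolding e using True by simp
    next
      case False2: False
      have jn: "j - n < n" using assms False2 by simp
      have q: "i + j = (i + (j - n)) + n" using False2 by simp
      have r: "(i + (j - n)) mod n = (i+j) mod n" unfolding q by simp
      show ?thesis unfolding e Xmat_index[OF True jn] r using True False2 by simp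
    qed
  next
    case False
    show ?thesis
    proof (cases "j < n")
      case True2: True
      have jn: "i - n < n" using assms False by simp
      have q: "i + j = (i - n + j) + n" using False by simp
      have r: "(i - n + j) mod n = (i+j) mod n" unfolding q by simp
      show ?thesis unfolding e Xmat_index[OF jn True2] r using False True2 by simp
    next
      case False2: False
      thus ?thesis unfolding e using False by simp
    qed
  qed
qed

lemma Amat_mult_vec: assumes "n \<ge> 1" "g \<in> carrier_vec (2*n)" "k < 2*n"
  shows "(Amat n *\<^sub>v g) $ k = g $ (shift n k)"
proof -
  have "(Amat n *\<^sub>v g) $ k = (\<Sum>j\<in>{0..<2*n}. (if j = shift n k then 1 else 0) * g $ j)"
    using assms Amat_carrier[of n] by (auto simp: scalar_prod_def Amat_index intro!: sum.cong)
  also have "\<dots> = g $ (shift n k)" using shift_lt[OF assms(1,3)]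
    by (simp add: if_distrib[of "\<lambda>c. c * _"] sum.delta' cong: if_cong)
  finally show ?thesis .
qed

lemma BY_index: assumes "n \<ge> 1" "Y \<in> carrier_mat (2*n) (2*n)" "i < 2*n" "j < 2*n"
  shows "(transpose_mat (Amat n) * Y) $$ (i,j) = Y $$ (unshift n i, j)"
proof -
  have "(transpose_mat (Amat n) * Y) $$ (i,j) = (\<Sum>m\<in>{0..<2*n}. (if m = unshift n i then 1 else 0) * Y $$ (m,j))"
    using assms Amat_carrier[of n] by (auto simp: scalar_prod_def Amat_index shift_unshift' intro!: sum.cong)
  also have "\<dots> = Y $$ (unshift n i, j)" using unshift_lt[OF assms(1,3)]
    by (simp add: if_distrib[of "\<lambda>c. c * _"] sum.delta' cong: if_cong)
  finally show ?thesis .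
qed

lemma YA_index: assumes "n \<ge> 1" "Y \<in> carrier_mat (2*n) (2*n)" "i < 2*n" "j < 2*n"
  shows "(Y * Amat n) $$ (i,j) = Y $$ (i, unshift n j)"
proof -
  have "(Y * Amat n) $$ (i,j) = (\<Sum>m\<in>{0..<2*n}. (if m = unshift n j then 1 else 0) * Y $$ (i,m))"
    using assms Amat_carrier[of n] by (auto simp: scalar_prod_def Amat_index shift_unshift' mult.commute intro!: sum.cong)
  also have "\<dots> = Y $$ (i, unshift n j)" using unshift_lt[OF assms(1,4)]
    by (simp add: if_distrib[of "\<lambda>c. c * _"] sum.delta' cong: if_cong)
  finally show ?thesis .
qed

lemma BJ_JA: assumes "n \<ge> 1"
  shows "transpose_mat (Amat n) * Jmat n x = Jmat n x * Amat n"
proof (rule eq_matI)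
  fix i j assume ij: "i < dim_row (Jmat n x * Amat n)" "j < dim_col (Jmat n x * Amat n)"
  hence i: "i < 2*n" and j: "j < 2*n" using Jmat_carrier[of n x] Amat_carrier[of n] by auto
  have m: "(unshift n i + j) mod n = (i + unshift n j) mod n"
    using mod_suc_inj[OF assms] unshift_mod[OF assms i, of j] unshift_mod[OF assms j, of i]
    by (metis add.commute)
  show "(transpose_mat (Amat n) * Jmat n x) $$ (i, j) = (Jmat n x * Amat n) $$ (i, j)"
    unfolding BY_index[OF assms Jmat_carrier i j] YA_index[OF assms Jmat_carrier i j]
     Jmat_index[OF unshift_lt[OF assms i] j, of x] Jmat_index[OF i unshift_lt[OF assms j], of x]
      unshift_lt_n[OF assms i] unshift_lt_n[OF assms j] m
      unshift_ge_n[OF assms i] unshift_ge_n[OF assms j]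
    by (rule refl)
qed (insert Jmat_carrier[of n x] Amat_carrier[of n], auto)

lemma BJe: assumes "n \<ge> 1" "k < 2*n"
  shows "transpose_mat (Amat n) * Jmat n (unit_vec (2*n) k) = Jmat n (unit_vec (2*n) (shift n k))"
proof (rule eq_matI)
  fix i j assume ij: "i < dim_row (Jmat n (unit_vec (2*n) (shift n k)))" "j < dim_col (Jmat n (unit_vec (2*n) (shift n k)))"
  hence i: "i < 2*n" and j: "j < 2*n" using Jmat_carrier[of n "unit_vec (2*n) (shift n k)"] by auto
  have lt: "p mod n < 2*n" for p
  proof -
    have "p mod n < n" using assms(1) by simp
    thus ?thesis by linarith
  qed
  have u1: "unit_vec (2*n) k $ ((unshift n i + j) mod n) = (if (unshift n i + j) mod n = k then 1 else 0)"
    by (rule index_unit_vec(1)[OF assms(2) lt])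
  have u2: "unit_vec (2*n) (shift n k) $ ((i + j) mod n) = (if (i + j) mod n = shift n k then 1 else 0)"
    by (rule index_unit_vec(1)[OF shift_lt[OF assms] lt])
  have e: "((unshift n i + j) mod n = k) = ((i + j) mod n = shift n k)"
    using key_mod[OF assms, of "unshift n i + j"] unshift_mod[OF assms(1) i, of j] by simp
  show "(transpose_mat (Amat n) * Jmat n (unit_vec (2*n) k)) $$ (i, j) = Jmat n (unit_vec (2*n) (shift n k)) $$ (i, j)"
    unfolding BY_index[OF assms(1) Jmat_carrier i j] 
     Jmat_index[OF unshift_lt[OF assms(1) i] j] Jmat_index[OF i j]
      unshift_lt_n[OF assms(1) i] unshift_ge_n[OF assms(1) i] u1 u2 e
    by (rule refl)
qed (insert Jmat_carrier[of n "unit_vec (2*n) k"] Jmat_carrier[of n "unit_vec (2*n) (shift n k)"] Amat_carrier[of n], auto)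

lemma mtrace_mult: "P \<in> carrier_mat N N \<Longrightarrow> Q \<in> carrier_mat N N \<Longrightarrow>
  mtrace (P*Q) = (\<Sum>i\<in>{0..<N}. \<Sum>m\<in>{0..<N}. P$$(i,m) * Q$$(m,i))"
  by (simp add: mtrace_def scalar_prod_def atLeast0LessThan)

lemma mtrace_comm: "P \<in> carrier_mat N N \<Longrightarrow> Q \<in> carrier_mat N N \<Longrightarrow> mtrace (P*Q) = mtrace (Q*P)"
  unfolding mtrace_mult by (subst sum.swap) (simp add: mult.commute)

lemma mtrace_add: "X \<in> carrier_mat N N \<Longrightarrow> Y \<in> carrier_mat N N \<Longrightarrow> mtrace (X + Y) = mtrace X + mtrace Y"
  by (simp add: mtrace_def sum.distrib)

lemma square_expand: fixes M K :: "real mat" assumes "M \<in> carrier_mat N N" "K \<in> carrier_mat N N"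
  shows "(M + t \<cdot>\<^sub>m K) ^\<^sub>m 2 = M*M + t \<cdot>\<^sub>m (M*K + K*M) + (t*t) \<cdot>\<^sub>m (K*K)"
proof -
  have "(M + t \<cdot>\<^sub>m K) ^\<^sub>m 2 = (M + t \<cdot>\<^sub>m K) * (M + t \<cdot>\<^sub>m K)"
    using assms by (simp add: numeral_2_eq_2)
  also have "\<dots> = M*M + t \<cdot>\<^sub>m (M*K + K*M) + (t*t) \<cdot>\<^sub>m (K*K)"
    by (rule eq_matI) (insert assms, auto simp: scalar_prod_def sum_distrib_left sum.distrib[symmetric] algebra_simps mult.left_commute)
  finally show ?thesis .
qed

lemma mtrace_lin: assumes "P \<in> carrier_mat N N" "X \<in> carrier_mat N N" "Y \<in> carrier_mat N N" "Z \<in> carrier_mat N N"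
  shows "mtrace (P * (X + t \<cdot>\<^sub>m Y + s \<cdot>\<^sub>m Z)) = mtrace (P*X) + t * mtrace (P*Y) + s * mtrace (P*Z)"
proof -
  have C: "X + t \<cdot>\<^sub>m Y + s \<cdot>\<^sub>m Z \<in> carrier_mat N N" using assms by simp
  show ?thesis unfolding mtrace_mult[OF assms(1) C] mtrace_mult[OF assms(1) assms(2)]
    mtrace_mult[OF assms(1) assms(3)] mtrace_mult[OF assms(1) assms(4)]
    using assms by (simp add: sum_distrib_left sum.distrib[symmetric] algebra_simps)
qed

lemma Jmat_lin: assumes "n \<ge> 1" "x \<in> carrier_vec (2*n)" "e \<in> carrier_vec (2*n)"
  shows "Jmat n (x + t \<cdot>\<^sub>v e) = Jmat n x + t \<cdot>\<^sub>m Jmat n e"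
proof (rule eq_matI)
  fix i j assume "i < dim_row (Jmat n x + t \<cdot>\<^sub>m Jmat n e)" "j < dim_col (Jmat n x + t \<cdot>\<^sub>m Jmat n e)"
  hence i: "i < 2*n" and j: "j < 2*n" using Jmat_carrier[of n x] Jmat_carrier[of n e] by auto
  have p: "(i+j) mod n < 2*n"
  proof -
    have "(i+j) mod n < n" using assms(1) by simp
    thus ?thesis by linarith
  qed
  show "Jmat n (x + t \<cdot>\<^sub>v e) $$ (i, j) = (Jmat n x + t \<cdot>\<^sub>m Jmat n e) $$ (i, j)"
    using assms i j p Jmat_carrier[of n x] Jmat_carrier[of n e]
    by (simp add: Jmat_index)
qed (insert Jmat_carrier[of n x] Jmat_carrier[of n e] Jmat_carrier[of n "x + t \<cdot>\<^sub>v e"], auto)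

lemma qfun_poly: assumes "n \<ge> 1" "Hs \<in> carrier_mat (2*n) (2*n)" "x \<in> carrier_vec (2*n)" "e \<in> carrier_vec (2*n)"
  shows "qfun n Hs l (x + t \<cdot>\<^sub>v e) = (1 / (2 * real n)) *
    (mtrace (transpose_mat (Amat n) ^\<^sub>m l * ((Jmat n x * Hs) * (Jmat n x * Hs)))
     + t * mtrace (transpose_mat (Amat n) ^\<^sub>m l * ((Jmat n x * Hs) * (Jmat n e * Hs) + (Jmat n e * Hs) * (Jmat n x * Hs)))
     + t^2 * mtrace (transpose_mat (Amat n) ^\<^sub>m l * ((Jmat n e * Hs) * (Jmat n e * Hs))))"
proof -
  have JJ: "Jmat n x \<in> carrier_mat (2*n) (2*n)" "Jmat n e \<in> carrier_mat (2*n) (2*n)" by (rule Jmat_carrier)+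
  have B: "transpose_mat (Amat n) ^\<^sub>m l \<in> carrier_mat (2*n) (2*n)" using Amat_carrier[of n] by simp
  have "Jmat n (x + t \<cdot>\<^sub>v e) * Hs = Jmat n x * Hs + t \<cdot>\<^sub>m (Jmat n e * Hs)"
    unfolding Jmat_lin[OF assms(1,3,4)]
    using JJ assms(2) by (simp add: add_mult_distrib_mat mult_smult_assoc_mat)
  moreover have "(Jmat n x * Hs + t \<cdot>\<^sub>m (Jmat n e * Hs)) ^\<^sub>m 2 = (Jmat n x * Hs) * (Jmat n x * Hs)
     + t \<cdot>\<^sub>m ((Jmat n x * Hs) * (Jmat n e * Hs) + (Jmat n e * Hs) * (Jmat n x * Hs))
     + (t*t) \<cdot>\<^sub>m ((Jmat n e * Hs) * (Jmat n e * Hs))"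
    by (rule square_expand) (insert JJ assms(2), auto)
  moreover have "mtrace (transpose_mat (Amat n) ^\<^sub>m l * ((Jmat n x * Hs) * (Jmat n x * Hs)
     + t \<cdot>\<^sub>m ((Jmat n x * Hs) * (Jmat n e * Hs) + (Jmat n e * Hs) * (Jmat n x * Hs))
     + (t*t) \<cdot>\<^sub>m ((Jmat n e * Hs) * (Jmat n e * Hs))))
     = mtrace (transpose_mat (Amat n) ^\<^sub>m l * ((Jmat n x * Hs) * (Jmat n x * Hs)))
     + t * mtrace (transpose_mat (Amat n) ^\<^sub>m l * ((Jmat n x * Hs) * (Jmat n e * Hs) + (Jmat n e * Hs) * (Jmat n x * Hs)))
     + (t*t) * mtrace (transpose_mat (Amat n) ^\<^sub>m l * ((Jmat n e * Hs) * (Jmat n e * Hs)))"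
    by (rule mtrace_lin[OF B]) (insert JJ assms(2), auto)
  ultimately show ?thesis unfolding qfun_def by (simp add: power2_eq_square)
qed

lemma grad_entry: assumes "n \<ge> 1" "Hs \<in> carrier_mat (2*n) (2*n)" "x \<in> carrier_vec (2*n)" "k < 2*n"
  shows "grad (2*n) (qfun n Hs l) x $ k = (1 / (2 * real n)) *
     mtrace (transpose_mat (Amat n) ^\<^sub>m l * ((Jmat n x * Hs) * (Jmat n (unit_vec (2*n) k) * Hs)
       + (Jmat n (unit_vec (2*n) k) * Hs) * (Jmat n x * Hs)))"
proof -
  define a where "a = mtrace (transpose_mat (Amat n) ^\<^sub>m l * ((Jmat n x * Hs) * (Jmat n x * Hs)))"
  define b where "b = mtrace (transpose_mat (Amat n) ^\<^sub>m l * ((Jmat n x * Hs) * (Jmat n (unit_vec (2*n) k) * Hs)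
       + (Jmat n (unit_vec (2*n) k) * Hs) * (Jmat n x * Hs)))"
  define d where "d = mtrace (transpose_mat (Amat n) ^\<^sub>m l * ((Jmat n (unit_vec (2*n) k) * Hs) * (Jmat n (unit_vec (2*n) k) * Hs)))"
  define c where "c = 1 / (2 * real n)"
  have f: "(\<lambda>t. qfun n Hs l (x + t \<cdot>\<^sub>v unit_vec (2*n) k)) = (\<lambda>t. c * (a + t * b + t^2 * d))"
    unfolding a_def b_def c_def d_def using qfun_poly[OF assms(1,2,3) unit_vec_carrier] by simp
  have D: "((\<lambda>t. c * (a + t * b + t^2 * d)) has_field_derivative c * b) (at 0)"
    by (auto intro!: derivative_eq_intros)
  have "grad (2*n) (qfun n Hs l) x $ k = deriv (\<lambda>t. c * (a + t * b + t^2 * d)) 0"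
    unfolding grad_def index_vec[OF assms(4)] f by (rule refl)
  also have "\<dots> = c * b" by (rule DERIV_imp_deriv[OF D])
  finally show ?thesis unfolding b_def c_def .
qed

lemma BM_comm: assumes "n \<ge> 1" "Hs \<in> carrier_mat (2*n) (2*n)"
    "Amat n * Hs = Hs * transpose_mat (Amat n)"
  shows "transpose_mat (Amat n) * (Jmat n x * Hs) = (Jmat n x * Hs) * transpose_mat (Amat n)"
proof -
  have A: "Amat n \<in> carrier_mat (2*n) (2*n)" and B: "transpose_mat (Amat n) \<in> carrier_mat (2*n) (2*n)"
    and J: "Jmat n x \<in> carrier_mat (2*n) (2*n)" using Amat_carrier[of n] Jmat_carrier[of n x] by auto
  have "transpose_mat (Amat n) * (Jmat n x * Hs) = (transpose_mat (Amat n) * Jmat n x) * Hs"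
    using A B J assms(2) by simp
  also have "\<dots> = (Jmat n x * Amat n) * Hs" using BJ_JA[OF assms(1)] by simp
  also have "\<dots> = Jmat n x * (Amat n * Hs)" using A B J assms(2) by simp
  also have "\<dots> = Jmat n x * (Hs * transpose_mat (Amat n))" using assms(3) by simp
  also have "\<dots> = (Jmat n x * Hs) * transpose_mat (Amat n)" using A B J assms(2) by simp
  finally show ?thesis .
qed

lemma pow_comm: assumes "B \<in> carrier_mat N N" "M \<in> carrier_mat N N" "B * M = M * B"
  shows "B ^\<^sub>m l * M = M * B ^\<^sub>m l"
proof (induction l)
  case 0 thus ?case using assms by simp
next
  case (Suc l)
  have P: "B ^\<^sub>m l \<in> carrier_mat N N" using assms by simp
  have "B ^\<^sub>m Suc l * M = B ^\<^sub>m l * (B * M)" using assoc_mult_mat[OF P assms(1) assms(2)] by simp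
  also have "\<dots> = (B ^\<^sub>m l * M) * B" unfolding assms(3) using assoc_mult_mat[OF P assms(2) assms(1)] by simp
  also have "\<dots> = M * (B ^\<^sub>m l * B)" unfolding Suc using assoc_mult_mat[OF assms(2) P assms(1)] by simp
  finally show ?case by simp
qed

lemma G_simp: assumes "P \<in> carrier_mat N N" "M \<in> carrier_mat N N" "K \<in> carrier_mat N N" "P * M = M * P"
  shows "mtrace (P * (M*K + K*M)) = 2 * mtrace (P * (K*M))"
proof -
  have "mtrace (P * (M*K + K*M)) = mtrace (P * (M*K)) + mtrace (P * (K*M))"
    unfolding mult_add_distrib_mat[OF assms(1) mult_carrier_mat[OF assms(2,3)] mult_carrier_mat[OF assms(3,2)]]
    by (rule mtrace_add[of _ N]) (insert assms, auto)
  moreover have "mtrace (P * (M*K)) = mtrace (P * (K*M))"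
  proof -
    have "P * (M*K) = (P*M)*K" by (rule assoc_mult_mat[OF assms(1,2,3), symmetric])
    also have "\<dots> = (M*P)*K" unfolding assms(4) ..
    also have "\<dots> = M*(P*K)" by (rule assoc_mult_mat[OF assms(2,1,3)])
    finally have "mtrace (P * (M*K)) = mtrace (M*(P*K))" by simp
    also have "\<dots> = mtrace ((P*K)*M)" using assms by (intro mtrace_comm[of _ N]) auto
    also have "(P*K)*M = P*(K*M)" by (rule assoc_mult_mat[OF assms(1,3,2)])
    finally show ?thesis .
  qed
  ultimately show ?thesis by simp
qed

theorem mainTheorem16:
  fixes n :: nat and Hs :: "real mat" and x :: "real vec" and l :: nat
  assumes "n \<ge> 2"
    and "admissible_hessian n Hs"
    and "x \<in> carrier_vec (2*n)"
    and "1 \<le> l" and "l \<le> n - 1"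
  shows "grad (2*n) (qfun n Hs l) x = (Amat n ^\<^sub>m l) *\<^sub>v grad (2*n) (qfun n Hs 0) x
     \<and> grad (2*n) (qfun n Hs l) x = Amat n *\<^sub>v grad (2*n) (qfun n Hs (l - 1)) x"
proof -
  have n1: "n \<ge> 1" using assms(1) by simp
  have H: "Hs \<in> carrier_mat (2*n) (2*n)" and AH: "Amat n * Hs = Hs * transpose_mat (Amat n)"
    using assms(2) unfolding admissible_hessian_def by auto
  define B where "B = transpose_mat (Amat n)"
  define M where "M = Jmat n x * Hs"
  define K where "K = (\<lambda>k. Jmat n (unit_vec (2*n) k) * Hs)"
  define g where "g = (\<lambda>l. grad (2*n) (qfun n Hs l) x)"
  have A: "Amat n \<in> carrier_mat (2*n) (2*n)" by (rule Amat_carrier)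
  have Bc: "B \<in> carrier_mat (2*n) (2*n)" unfolding B_def using A by simp
  have Mc: "M \<in> carrier_mat (2*n) (2*n)" unfolding M_def using Jmat_carrier[of n x] H by simp
  have Kc: "K k \<in> carrier_mat (2*n) (2*n)" for k unfolding K_def using Jmat_carrier[of n "unit_vec (2*n) k"] H by simp
  have BMc: "B ^\<^sub>m l * M = M * B ^\<^sub>m l" for l
    by (rule pow_comm[OF Bc Mc]) (unfold B_def M_def, rule BM_comm[OF n1 H AH])
  have gc: "g l \<in> carrier_vec (2*n)" for l unfolding g_def grad_def by simp
  have ge: "g l $ k = (1 / (2 * real n)) * (2 * mtrace (B ^\<^sub>m l * (K k * M)))" if "k < 2*n" for l k
  proof -
    have "g l $ k = (1 / (2 * real n)) * mtrace (B ^\<^sub>m l * (M * K k + K k * M))"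
      unfolding g_def B_def M_def K_def by (rule grad_entry[OF n1 H assms(3) that])
    also have "mtrace (B ^\<^sub>m l * (M * K k + K k * M)) = 2 * mtrace (B ^\<^sub>m l * (K k * M))"
      by (rule G_simp[OF pow_carrier_mat[OF Bc] Mc Kc BMc])
    finally show ?thesis .
  qed
  have sh: "mtrace (B ^\<^sub>m Suc l * (K k * M)) = mtrace (B ^\<^sub>m l * (K (shift n k) * M))" if "k < 2*n" for l k
  proof -
    have P: "B ^\<^sub>m l \<in> carrier_mat (2*n) (2*n)" using Bc by simp
    have J: "Jmat n (unit_vec (2*n) k) \<in> carrier_mat (2*n) (2*n)" by (rule Jmat_carrier)
    have KM: "K k * M \<in> carrier_mat (2*n) (2*n)" using Kc Mc by (rule mult_carrier_mat)
    have BK: "B * K k = K (shift n k)"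
    proof -
      have "B * K k = (B * Jmat n (unit_vec (2*n) k)) * Hs"
        unfolding K_def by (rule assoc_mult_mat[OF Bc J H, symmetric])
      thus ?thesis unfolding B_def BJe[OF n1 that] K_def by simp
    qed
    have "B ^\<^sub>m Suc l * (K k * M) = (B ^\<^sub>m l * B) * (K k * M)" by simp
    also have "\<dots> = B ^\<^sub>m l * (B * (K k * M))" by (rule assoc_mult_mat[OF P Bc KM])
    also have "B * (K k * M) = (B * K k) * M" by (rule assoc_mult_mat[OF Bc Kc Mc, symmetric])
    also have "\<dots> = K (shift n k) * M" unfolding BK ..
    finally show ?thesis by simp
  qed
  have step: "g (Suc l) = Amat n *\<^sub>v g l" for l
  proof (rule eq_vecI)
    fix k assume "k < dim_vec (Amat n *\<^sub>v g l)"
    hence k: "k < 2*n" using A by simp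
    show "g (Suc l) $ k = (Amat n *\<^sub>v g l) $ k"
      unfolding Amat_mult_vec[OF n1 gc k] ge[OF k] ge[OF shift_lt[OF n1 k]] sh[OF k] by (rule refl)
  qed (insert A gc, auto)
  have pw: "g l = (Amat n ^\<^sub>m l) *\<^sub>v g 0" for l
  proof (induction l)
    case 0
    have d: "dim_row (Amat n) = 2*n" using A by simp
    have "Amat n ^\<^sub>m 0 = 1\<^sub>m (2*n)" using d by simp
    thus ?case using one_mult_mat_vec[OF gc[of 0]] by simp
  next
    case (Suc l)
    have "g (Suc l) = Amat n *\<^sub>v ((Amat n ^\<^sub>m l) *\<^sub>v g 0)" unfolding step Suc ..
    also have "\<dots> = (Amat n * Amat n ^\<^sub>m l) *\<^sub>v g 0"
      by (rule assoc_mult_mat_vec[OF A pow_carrier_mat[OF A] gc, symmetric])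
    also have "Amat n * Amat n ^\<^sub>m l = Amat n ^\<^sub>m l * Amat n" using pow_comm[OF A A refl] by simp
    finally show ?case by simp
  qed
  have "l = Suc (l - 1)" using assms(4) by simp
  hence "g l = Amat n *\<^sub>v g (l - 1)" using step by metis
  moreover have "g l = Amat n ^\<^sub>m l *\<^sub>v g 0" by (rule pw)
  ultimately show ?thesis unfolding g_def by blast
qed

end
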